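(* Let $q$ be a prime power and let $C$ be an $[n,k,d]_q$ Griesmer optimal linear code with $q\mid d$ and $\Gamma_q(n,k,d)\ge 2$. Let $\mathbf{c}\in C$ be any codeword of weight $d$ and let $C'$ be any linear subcode of $C$ with $C=\langle \mathbf{c},C'\rangle$ and $\mathbf{c}\notin C'$ (a supplementary subcode of $\mathbf{c}$). Then $$A_{d/q}\big(\Upsilon_{\mathbf{c}}(C)\big)\le \min\Big\{A_d(C'),\ \min\{A_d(C'+\alpha\mathbf{c}) : \alpha\in\mathbb{F}_q^*\}\Big\}.$$
   Context: An $[n,k,d]_q$ linear code is a $k$-dimensional subspace of $\mathbb{F}_q^n$ with minimum nonzero Hamming weight $d$. For any set $S\subseteq\mathbb{F}_q^n$, $A_i(S)$ is the number of vectors of Hamming weight $i$ in $S$; $C'+\mathbf{v}=\{\mathbf{c}'+\mathbf{v}:\mathbf{c}'\in C'\}$. The support of a vector is the set of its nonzero coordinates; $\Upsilon_{\mathbf{c}}(C)$ (the residual code of $C$ with respect to $\mathbf{c}$) is the code obtained from $C$ by deleting all coordinates in the support of $\mathbf{c}$. Let $g_q(k,d)=\sum_{i=0}^{k-1}\lceil d/q^i\rceil$. $C$ is Griesmer optimal if $n<g_q(k,d+1)$. For a Griesmer optimal $[n,k,d]_q$ code, $\Gamma_q(n,k,d)=k$ if $n=g_q(k,d)$; otherwise $\Gamma_q(n,k,d)$ is the smallest non-negative integer $k_1$ such that $n-g_q(k_1,d)\ge g_q(k-k_1,\lceil d/q^{k_1}\rceil+1)$ (with $g_q(0,\cdot)=0$).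 *)

theory Defs
  imports Complex_Main
begin

text \<open>Vectors of F_q^n are lists of length n over a finite field 'a (q = CARD('a)).\<close>

definition hwt :: "'a::zero list \<Rightarrow> nat" where
  "hwt v = length (filter (\<lambda>x. x \<noteq> 0) v)"

definition vadd :: "'a::plus list \<Rightarrow> 'a list \<Rightarrow> 'a list" where
  "vadd u v = map2 (+) u v"

definition vscale :: "'a::times \<Rightarrow> 'a list \<Rightarrow> 'a list" where
  "vscale a v = map (\<lambda>x. a * x) v"

definition zvec :: "nat \<Rightarrow> 'a::zero list" where
  "zvec n = replicate n 0"

definition lincomb :: "nat \<Rightarrow> 'a::comm_ring_1 list \<Rightarrow> 'a list list \<Rightarrow> 'a list" where
  "lincomb n as B = map (\<lambda>i. \<Sum>j<length B. as ! j * (B ! j) ! i) [0..<n]"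

definition is_linear_code :: "nat \<Rightarrow> 'a::field list set \<Rightarrow> bool" where
  "is_linear_code n C \<longleftrightarrow> C \<subseteq> {v. length v = n} \<and> zvec n \<in> C \<and>
     (\<forall>u\<in>C. \<forall>v\<in>C. vadd u v \<in> C) \<and> (\<forall>a. \<forall>v\<in>C. vscale a v \<in> C)"

definition has_dim :: "nat \<Rightarrow> 'a::field list set \<Rightarrow> nat \<Rightarrow> bool" where
  "has_dim n C k \<longleftrightarrow> (\<exists>B. length B = k \<and> set B \<subseteq> C \<and>
     C = {lincomb n as B | as. length as = k} \<and>
     (\<forall>as. length as = k \<longrightarrow> lincomb n as B = zvec n \<longrightarrow> (\<forall>x\<in>set as. x = 0)))"

definition min_wt :: "nat \<Rightarrow> 'a::field list set \<Rightarrow> nat \<Rightarrow> bool" where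
  "min_wt n C d \<longleftrightarrow> (\<exists>c\<in>C. c \<noteq> zvec n \<and> hwt c = d) \<and>
     (\<forall>c\<in>C. c \<noteq> zvec n \<longrightarrow> d \<le> hwt c)"

definition is_nkd_code :: "nat \<Rightarrow> nat \<Rightarrow> nat \<Rightarrow> 'a::field list set \<Rightarrow> bool" where
  "is_nkd_code n k d C \<longleftrightarrow> is_linear_code n C \<and> has_dim n C k \<and> min_wt n C d"

definition A :: "nat \<Rightarrow> 'a::zero list set \<Rightarrow> nat" where
  "A i S = card {v \<in> S. hwt v = i}"

definition griesmer :: "nat \<Rightarrow> nat \<Rightarrow> nat \<Rightarrow> nat" where
  "griesmer q k d = (\<Sum>i<k. nat \<lceil>real d / real q ^ i\<rceil>)"

definition griesmer_optimal :: "nat \<Rightarrow> nat \<Rightarrow> nat \<Rightarrow> nat \<Rightarrow> bool" where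
  "griesmer_optimal q n k d \<longleftrightarrow> n < griesmer q k (d + 1)"

definition Gamma :: "nat \<Rightarrow> nat \<Rightarrow> nat \<Rightarrow> nat \<Rightarrow> nat" where
  "Gamma q n k d = (if n = griesmer q k d then k else
     (LEAST k1. int n - int (griesmer q k1 d)
                  \<ge> int (griesmer q (k - k1) (nat \<lceil>real d / real q ^ k1\<rceil> + 1))))"

definition residual :: "'a::zero list \<Rightarrow> 'a list set \<Rightarrow> 'a list set" where
  "residual c C = (\<lambda>x. nths x {i. i < length c \<and> c ! i = 0}) ` C"

definition coset :: "'a::plus list set \<Rightarrow> 'a list \<Rightarrow> 'a list set" where
  "coset C' v = (\<lambda>x. vadd x v) ` C'"

end

theory Submission
  imports Defs
begin


lemma hwt_sum: "hwt v = (\<Sum>i<length v. if v!i \<noteq> 0 then 1 else 0)"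
proof -
  have "hwt v = card {i. i < length v \<and> v!i \<noteq> 0}"
    unfolding hwt_def by (simp add: length_filter_conv_card)
  also have "{i. i < length v \<and> v!i \<noteq> 0} = {i\<in>{..<length v}. v!i \<noteq> 0}" by auto
  also have "card \<dots> = (\<Sum>i<length v. if v!i \<noteq> 0 then 1 else 0)"
    by (simp add: sum.inter_filter[symmetric])
  finally show ?thesis .
qed

lemma hwt_nths: "hwt (nths v I) = (\<Sum>i\<in>{i. i<length v \<and> i\<in>I}. if v!i \<noteq> 0 then 1 else 0)"
proof -
  have "hwt (nths v I) = length (filter (\<lambda>p. snd p \<in> I \<and> fst p \<noteq> 0) (zip v [0..<length v]))"
    unfolding hwt_def nths_def by (simp add: filter_map filter_filter o_def conj_commute)
  also have "\<dots> = card {i. i < length v \<and> i \<in> I \<and> v!i \<noteq> 0}"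
    by (auto simp: length_filter_conv_card nth_zip intro!: arg_cong[where f=card])
  also have "{i. i < length v \<and> i \<in> I \<and> v!i \<noteq> 0} = {i\<in>{i. i<length v \<and> i\<in>I}. v!i \<noteq> 0}" by auto
  also have "card \<dots> = (\<Sum>i\<in>{i. i<length v \<and> i\<in>I}. if v!i \<noteq> 0 then 1 else 0)"
    by (simp add: sum.inter_filter[symmetric])
  finally show ?thesis .
qed

lemma vadd_nth: "i < length u \<Longrightarrow> i < length v \<Longrightarrow> vadd u v ! i = u!i + v!i"
  by (simp add: vadd_def)
lemma vadd_len: "length (vadd u v) = min (length u) (length v)"
  by (simp add: vadd_def)
lemma vscale_nth: "i < length v \<Longrightarrow> vscale a v ! i = a * v!i"
  by (simp add: vscale_def)
lemma vscale_len: "length (vscale a v) = length v"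
  by (simp add: vscale_def)

lemma vadd_zero: "length x = length (c::'a::field list) \<Longrightarrow> vadd x (vscale 0 c) = x"
  by (rule nth_equalityI) (auto simp: vadd_len vscale_len vadd_nth vscale_nth)

lemma count_beta:
  fixes xi ci :: "'a::{finite,field}"
  assumes "ci \<noteq> 0"
  shows "(\<Sum>b\<in>UNIV. if xi + b * ci \<noteq> 0 then 1 else 0) = card (UNIV::'a set) - 1"
proof -
  define b0 where "b0 = - xi / ci"
  have e: "xi + b * ci = 0 \<longleftrightarrow> b = b0" for b
  proof
    assume "xi + b * ci = 0"
    hence "b * ci = - xi" by (simp add: eq_neg_iff_add_eq_0 add.commute)
    moreover have "b = (b * ci) / ci" using assms by simp
    ultimately show "b = b0" unfolding b0_def by simp
  next
    assume "b = b0"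
    thus "xi + b * ci = 0" unfolding b0_def using assms by simp
  qed
  have "(\<Sum>b\<in>UNIV. if xi + b * ci \<noteq> 0 then 1 else 0) = (\<Sum>b\<in>UNIV. if b \<noteq> b0 then 1 else (0::nat))"
    by (rule sum.cong) (simp_all only: e)
  also have "\<dots> = card {b\<in>UNIV. b \<noteq> b0}"
    by (simp add: sum.inter_filter[symmetric])
  also have "{b\<in>UNIV. b \<noteq> b0} = UNIV - {b0}" by auto
  finally show ?thesis by (simp add: card_Diff_singleton)
qed

lemma nths_cong:
  "length u = length w \<Longrightarrow> (\<forall>i<length u. i \<in> I \<longrightarrow> u!i = w!i) \<Longrightarrow> nths u I = nths w I"
proof (induction u w arbitrary: I rule: list_induct2)
  case Nil then show ?case by simp
next
  case (Cons x xs y ys)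
  have "\<forall>i<length xs. i \<in> {j. Suc j \<in> I} \<longrightarrow> xs!i = ys!i" using Cons.prems by auto
  from Cons.IH[OF this] Cons.prems show ?case by (auto simp: nths_Cons)
qed

theorem proposition1:
  fixes C C' :: "'a::{finite,field} list set" and c :: "'a list" and n k d :: nat
  assumes "is_nkd_code n k d C"
    and "griesmer_optimal (card (UNIV :: 'a set)) n k d"
    and "(card (UNIV :: 'a set)) dvd d"
    and "Gamma (card (UNIV :: 'a set)) n k d \<ge> 2"
    and "c \<in> C" and "hwt c = d"
    and "is_linear_code n C'" and "C' \<subseteq> C"
    and "C = {vadd x (vscale a c) | x a. x \<in> C'}"
    and "c \<notin> C'"
  shows "A (d div (card (UNIV :: 'a set))) (residual c C)
           \<le> min (A d C') (Min {A d (coset C' (vscale \<alpha> c)) | \<alpha>. \<alpha> \<noteq> 0})"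
proof -
  define q where "q = card (UNIV :: 'a set)"
  define m where "m = d div q"
  have linC: "is_linear_code n C" and mw: "min_wt n C d"
    using assms(1) by (auto simp: is_nkd_code_def)
  have lenC: "\<And>v. v \<in> C \<Longrightarrow> length v = n" using linC by (auto simp: is_linear_code_def)
  have lenC': "\<And>v. v \<in> C' \<Longrightarrow> length v = n" using assms(7) by (auto simp: is_linear_code_def)
  have lc: "length c = n" using lenC assms(5) .
  have minC: "\<And>v. v \<in> C \<Longrightarrow> v \<noteq> zvec n \<Longrightarrow> d \<le> hwt v" using mw by (auto simp: min_wt_def)
  have q2: "q \<ge> 2"
  proof -
    have "card {0::'a, 1} = 2" by simp
    moreover have "card {0::'a, 1} \<le> q" unfolding q_def by (rule card_mono) auto
    ultimately show ?thesis by simp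
  qed
  have dq: "d = q * m" using assms(3) unfolding m_def q_def by simp
  have hwt0: "\<And>v::'a list. length v = n \<Longrightarrow> hwt v = 0 \<Longrightarrow> v = zvec n"
  proof -
    fix v :: "'a list" assume lv: "length v = n" and h: "hwt v = 0"
    have "\<forall>y\<in>set v. y = 0" using h by (simp add: hwt_def filter_empty_conv)
    hence "replicate (length v) 0 = v" by (rule replicate_length_same)
    thus "v = zvec n" using lv by (simp add: zvec_def)
  qed
  have dpos: "d > 0"
  proof -
    obtain c0 where "c0 \<in> C" "c0 \<noteq> zvec n" "hwt c0 = d" using mw by (auto simp: min_wt_def)
    moreover have "length c0 = n" using lenC \<open>c0 \<in> C\<close> by blast
    ultimately show ?thesis using hwt0[of c0] by (cases "d = 0") auto
  qed
  hence mpos: "m > 0" using dq by simp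
  define Z where "Z = {i. i < length c \<and> c!i = 0}"
  define S where "S = {i. i < n \<and> c!i \<noteq> 0}"
  have ZS: "Z \<union> S = {..<n}" "Z \<inter> S = {}" "finite Z" "finite S" using lc by (auto simp: Z_def S_def)
  have cardS: "card S = d"
  proof -
    have "hwt c = (\<Sum>i<n. if c!i \<noteq> 0 then 1 else 0)" unfolding hwt_sum lc ..
    also have "\<dots> = card {i\<in>{..<n}. c!i \<noteq> 0}" by (simp add: sum.inter_filter[symmetric])
    also have "{i\<in>{..<n}. c!i \<noteq> 0} = S" by (auto simp: S_def)
    finally show ?thesis using assms(6) by simp
  qed
  have key: "\<exists>x\<in>C'. \<forall>b. hwt (vadd x (vscale b c)) = d \<and> nths (vadd x (vscale b c)) Z = r"
    if rR: "r \<in> residual c C" "hwt r = m" for r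
  proof -
    obtain y where y: "y \<in> C" "r = nths y Z" using rR unfolding residual_def Z_def by auto
    then obtain x a where x: "x \<in> C'" "y = vadd x (vscale a c)" using assms(9) by auto
    have lx: "length x = n" using lenC' x(1) .
    define v where "v b = vadd x (vscale b c)" for b
    have lv: "length (v b) = n" for b by (simp add: v_def vadd_len vscale_len lx lc)
    have vn: "i < n \<Longrightarrow> v b ! i = x!i + b * c!i" for b i
      by (simp add: v_def vadd_nth vscale_nth vscale_len lx lc)
    have projv: "nths (v b) Z = r" for b
    proof -
      have "nths (v b) Z = nths y Z"
        using lv x(2) vn by (intro nths_cong) (auto simp: v_def[symmetric] Z_def lc)
      thus ?thesis using y by simp
    qed
    have hr: "(\<Sum>i\<in>Z. if x!i \<noteq> 0 then 1 else 0) = m"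
    proof -
      have "hwt r = hwt (nths (v 0) Z)" using projv by simp
      also have "\<dots> = (\<Sum>i\<in>{i. i<n \<and> i\<in>Z}. if v 0!i \<noteq> 0 then 1 else 0)" by (simp add: hwt_nths lv)
      also have "{i. i<n \<and> i\<in>Z} = Z" using lc by (auto simp: Z_def)
      also have "(\<Sum>i\<in>Z. if v 0!i \<noteq> 0 then 1 else 0) = (\<Sum>i\<in>Z. if x!i \<noteq> 0 then 1 else 0)"
        using vn lc by (intro sum.cong) (auto simp: Z_def)
      finally show ?thesis using rR by simp
    qed
    have hv: "hwt (v b) = m + (\<Sum>i\<in>S. if x!i + b * c!i \<noteq> 0 then 1 else 0)" for b
    proof -
      have "hwt (v b) = (\<Sum>i\<in>Z \<union> S. if v b!i \<noteq> 0 then 1 else 0)" unfolding hwt_sum lv ZS(1) ..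
      also have "\<dots> = (\<Sum>i\<in>Z. if v b!i \<noteq> 0 then 1 else 0) + (\<Sum>i\<in>S. if v b!i \<noteq> 0 then 1 else 0)"
        by (rule sum.union_disjoint) (use ZS in auto)
      also have "(\<Sum>i\<in>Z. if v b!i \<noteq> 0 then 1 else 0) = (\<Sum>i\<in>Z. if x!i \<noteq> 0 then 1 else 0)"
        using vn lc by (intro sum.cong) (auto simp: Z_def)
      also have "(\<Sum>i\<in>S. if v b!i \<noteq> 0 then 1 else 0) = (\<Sum>i\<in>S. if x!i + b * c!i \<noteq> 0 then 1 else 0)"
        using vn by (intro sum.cong) (auto simp: S_def)
      finally show ?thesis using hr by simp
    qed
    have tot: "(\<Sum>b\<in>UNIV. hwt (v b)) = q * d"
    proof -
      have "(\<Sum>b\<in>UNIV. hwt (v b)) = q * m + (\<Sum>b\<in>UNIV. \<Sum>i\<in>S. if x!i + b * c!i \<noteq> 0 then 1 else 0)"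
        by (simp add: hv sum.distrib q_def)
      also have "(\<Sum>b\<in>UNIV. \<Sum>i\<in>S. if x!i + b * c!i \<noteq> 0 then 1 else (0::nat))
          = (\<Sum>i\<in>S. \<Sum>b\<in>UNIV. if x!i + b * c!i \<noteq> 0 then 1 else 0)" by (rule sum.swap)
      also have "\<dots> = (\<Sum>i\<in>S. q - 1)"
        by (intro sum.cong) (auto simp: S_def q_def count_beta)
      also have "\<dots> = d * (q - 1)" using cardS by simp
      finally show ?thesis using dq q2 by (simp add: algebra_simps diff_mult_distrib2)
    qed
    have inC: "v b \<in> C" for b using x(1) by (auto simp: assms(9) v_def)
    have ge: "d \<le> hwt (v b)" for b
    proof -
      have "v b \<noteq> zvec n"
      proof
        assume "v b = zvec n"
        hence "hwt (v b) = 0" by (simp add: zvec_def hwt_def)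
        thus False using hv[of b] mpos by simp
      qed
      thus ?thesis using minC inC by blast
    qed
    have eq: "hwt (v b) = d" for b
    proof (rule ccontr)
      assume "hwt (v b) \<noteq> d"
      hence "d < hwt (v b)" using ge[of b] by simp
      have "(\<Sum>b\<in>(UNIV::'a set). d) < (\<Sum>b\<in>UNIV. hwt (v b))"
        by (rule sum_strict_mono_ex1) (use ge \<open>d < hwt (v b)\<close> in auto)
      thus False using tot by (simp add: q_def mult.commute)
    qed
    have "\<forall>b. hwt (vadd x (vscale b c)) = d \<and> nths (vadd x (vscale b c)) Z = r"
      using eq projv unfolding v_def by blast
    thus ?thesis using x(1) by blast
  qed
  define R where "R = {r \<in> residual c C. hwt r = m}"
  have finC': "finite C'"
    by (rule finite_subset[OF _ finite_lists_length_eq[OF finite_UNIV, of n]]) (auto simp: lenC')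
  have bound: "card R \<le> card T" if "finite T" "\<forall>r\<in>R. \<exists>v\<in>T. nths v Z = r" for T :: "'a list set"
  proof -
    have "R \<subseteq> (\<lambda>v. nths v Z) ` T" using that(2) by (force simp: image_iff)
    hence "card R \<le> card ((\<lambda>v. nths v Z) ` T)" using that(1) by (intro card_mono) auto
    also have "\<dots> \<le> card T" using that(1) by (rule card_image_le)
    finally show ?thesis .
  qed
  have b1: "card R \<le> A d C'"
    unfolding A_def
  proof (rule bound)
    show "finite {v \<in> C'. hwt v = d}" using finC' by simp
    show "\<forall>r\<in>R. \<exists>v\<in>{v \<in> C'. hwt v = d}. nths v Z = r"
    proof
      fix r assume "r \<in> R"
      then obtain x where x: "x \<in> C'" "\<forall>b. hwt (vadd x (vscale b c)) = d \<and> nths (vadd x (vscale b c)) Z = r"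
        using key unfolding R_def by blast
      have x0: "vadd x (vscale 0 c) = x" using vadd_zero[of x c] lenC' lc x(1) by simp
      have "hwt x = d" "nths x Z = r" using x(2)[rule_format, of 0] unfolding x0 by simp_all
      thus "\<exists>v\<in>{v \<in> C'. hwt v = d}. nths v Z = r" using x(1) by blast
    qed
  qed
  have b2: "card R \<le> A d (coset C' (vscale \<alpha> c))" for \<alpha>
    unfolding A_def
  proof (rule bound)
    show "finite {v \<in> coset C' (vscale \<alpha> c). hwt v = d}" using finC' by (simp add: coset_def)
    show "\<forall>r\<in>R. \<exists>v\<in>{v \<in> coset C' (vscale \<alpha> c). hwt v = d}. nths v Z = r"
    proof
      fix r assume "r \<in> R"
      then obtain x where x: "x \<in> C'" "\<forall>b. hwt (vadd x (vscale b c)) = d \<and> nths (vadd x (vscale b c)) Z = r"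
        using key unfolding R_def by blast
      have "vadd x (vscale \<alpha> c) \<in> coset C' (vscale \<alpha> c)" unfolding coset_def using x(1) by (rule imageI)
      moreover have "hwt (vadd x (vscale \<alpha> c)) = d" "nths (vadd x (vscale \<alpha> c)) Z = r"
        using x(2)[rule_format, of \<alpha>] by simp_all
      ultimately show "\<exists>v\<in>{v \<in> coset C' (vscale \<alpha> c). hwt v = d}. nths v Z = r" by blast
    qed
  qed
  have fM: "finite {A d (coset C' (vscale \<alpha> c)) | \<alpha>. \<alpha> \<noteq> 0}"
  proof -
    have "{A d (coset C' (vscale \<alpha> c)) | \<alpha>. \<alpha> \<noteq> 0} = (\<lambda>\<alpha>. A d (coset C' (vscale \<alpha> c))) ` {\<alpha>. \<alpha> \<noteq> 0}" by auto
    thus ?thesis by simp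
  qed
  have neM: "{A d (coset C' (vscale \<alpha> c)) | \<alpha>. \<alpha> \<noteq> 0} \<noteq> {}"
    using one_neq_zero[where 'a='a] by blast
  have "A (d div q) (residual c C) = card R" by (simp add: A_def R_def m_def)
  hence "A (d div q) (residual c C) \<le> Min {A d (coset C' (vscale \<alpha> c)) | \<alpha>. \<alpha> \<noteq> 0}"
    using fM neM
  proof (subst Min_ge_iff)
    show "\<forall>a\<in>{A d (coset C' (vscale \<alpha> c)) | \<alpha>. \<alpha> \<noteq> 0}. A (d div q) (residual c C) \<le> a"
      using b2 \<open>A (d div q) (residual c C) = card R\<close> by auto
  qed auto
  moreover have "A (d div q) (residual c C) \<le> A d C'" using b1 \<open>A (d div q) (residual c C) = card R\<close> by simp
  ultimately show ?thesis unfolding q_def by (rule min.boundedI[rotated])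
qed

end
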